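(* Let $1\le D\le K-1$, let $\mathbf{L}$ be the $(K,D)$ AIR matrix, and let $x_0,\dots,x_{K-1}\in\mathbb{F}_q$. Define the broadcast symbols $c_k=\sum_{j=0}^{K-1}\mathbf{L}(j,k)\,x_j$ for $k\in[0:K-D-1]$. Then for every $k\in[0:K-D-1]$, $$c_k = x_k+\sum_{i=0}^{\lfloor l/2\rfloor} I_{\{k\in C_i\}}\; x_{(K-\lambda_{2i})+\big((k-(K-D-\lambda_{2i-1}))\bmod \lambda_{2i}\big)} \;+\;\sum_{i=1}^{\lceil l/2\rceil} I_{\{k\in C_i\cup C_{i+1}\cup\cdots\cup C_{\lceil l/2\rceil}\}}\sum_{j=1}^{\beta_{2i-1}} x_{\,k+\sum_{s=1}^{i-1}\beta_{2s-1}\lambda_{2s-1}+j\lambda_{2i-1}},$$ where $I_S$ equals $1$ if the statement $S$ is true and $0$ otherwise. (In particular the $i=0$ term of the first sum is $I_{\{k\in C_0\}}x_{(K-D)+(k\bmod \lambda_0)}$.)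
   Context: Notation: $[a:b]=\{a,a+1,\dots,b\}$ (empty if $b<a$). Let $K,D$ be integers with $1\le D\le K-1$. Define $\lambda_{-1}=K-D$, $\lambda_0=D$ and recursively, by Euclidean division, $\lambda_{i-1}=\beta_i\lambda_i+\lambda_{i+1}$ with $0\le\lambda_{i+1}<\lambda_i$, for $i=0,1,2,\dots$, stopping at the index $l\ge 0$ with $\lambda_{l+1}=0$ (so $\lambda_{l-1}=\beta_l\lambda_l$); $\beta_0\ge 0$ may be $0$, while $\beta_i\ge1$ for $i\ge1$. Set $\lambda_j=0$ for all $j>l$. For positive integers $m,n$ with $n\mid m$, let $\mathbf{I}_{m\times n}$ be the $m\times n$ matrix formed by stacking $m/n$ copies of the $n\times n$ identity matrix vertically, and $\mathbf{I}_{n\times m}$ its transpose ($m/n$ identity copies side by side). The $(K,D)$ AIR matrix $\mathbf{L}$ is the $K\times(K-D)$ $0/1$ matrix with rows indexed by $[0:K-1]$ and columns by $[0:K-D-1]$ whose entries are $0$ except in the following non-overlapping blocks: (a) the $(K-D)\times(K-D)$ identity matrix in rows $[0:K-D-1]$, columns $[0:K-D-1]$; (b) for each $i$ with $0\le 2i\le l$, the "even submatrix" $\mathbf{I}_{\lambda_{2i}\times\beta_{2i}\lambda_{2i}}$ occupying rows $[K-\lambda_{2i}:K-1]$ and columns $[K-D-\lambda_{2i-1}:K-D-\lambda_{2i+1}-1]$ (absent when $i=0$ and $\beta_0=0$); (c) for each $i$ with $1\le 2i+1\le l$, the "odd submatrix" $\mathbf{I}_{\beta_{2i+1}\lambda_{2i+1}\times\lambda_{2i+1}}$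 occupying rows $[K-\lambda_{2i}:K-\lambda_{2i+2}-1]$ and columns $[K-D-\lambda_{2i+1}:K-D-1]$. Column intervals: $C_i=[K-D-\lambda_{2i-1}:K-D-\lambda_{2i+1}-1]$ for $0\le i\le\lceil l/2\rceil$ (so $C_0=[0:\beta_0\lambda_0-1]$, empty if $\beta_0=0$); these partition $[0:K-D-1]$. *)

theory Defs
  imports Main
begin

(* Shifted Euclidean sequence: air_lamS K D n = lambda_{n-1}.
   lambda_{-1} = K-D, lambda_0 = D, lambda_{i+1} = lambda_{i-1} mod lambda_i while lambda_i > 0,
   and lambda_j = 0 once a zero has appeared. *)
fun air_lamS :: "nat \<Rightarrow> nat \<Rightarrow> nat \<Rightarrow> nat" where
  "air_lamS K D 0 = K - D"
| "air_lamS K D (Suc 0) = D"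
| "air_lamS K D (Suc (Suc n)) =
     (if air_lamS K D (Suc n) = 0 then 0 else air_lamS K D n mod air_lamS K D (Suc n))"

definition air_lam :: "nat \<Rightarrow> nat \<Rightarrow> int \<Rightarrow> nat" where
  "air_lam K D j = air_lamS K D (nat (j + 1))"

definition air_beta :: "nat \<Rightarrow> nat \<Rightarrow> nat \<Rightarrow> nat" where
  "air_beta K D i = air_lam K D (int i - 1) div air_lam K D (int i)"

definition air_l :: "nat \<Rightarrow> nat \<Rightarrow> nat" where
  "air_l K D = (LEAST i::nat. air_lam K D (int i + 1) = 0)"

definition air_C :: "nat \<Rightarrow> nat \<Rightarrow> nat \<Rightarrow> nat set" where
  "air_C K D i = {K - D - air_lam K D (2 * int i - 1) ..< K - D - air_lam K D (2 * int i + 1)}"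

(* The (K,D) AIR matrix, L j k (row j in [0:K-1], column k in [0:K-D-1]) is 1 iff this holds.
   (a) identity block; (b) even submatrices I_{lambda_{2i} x beta_{2i} lambda_{2i}}
   (entry (r,c) in local coordinates is 1 iff c mod lambda_{2i} = r);
   (c) odd submatrices I_{beta_{2i+1} lambda_{2i+1} x lambda_{2i+1}}
   (entry (r,c) is 1 iff r mod lambda_{2i+1} = c). *)
definition air_L :: "nat \<Rightarrow> nat \<Rightarrow> nat \<Rightarrow> nat \<Rightarrow> bool" where
  "air_L K D j k \<longleftrightarrow>
     (j < K - D \<and> k < K - D \<and> j = k)
   \<or> (\<exists>i::nat. 2 * i \<le> air_l K D
        \<and> K - air_lam K D (2 * int i) \<le> j \<and> j < K
        \<and> K - D - air_lam K D (2 * int i - 1) \<le> k \<and> k < K - D - air_lam K D (2 * int i + 1)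
        \<and> (k - (K - D - air_lam K D (2 * int i - 1))) mod air_lam K D (2 * int i)
             = j - (K - air_lam K D (2 * int i)))
   \<or> (\<exists>i::nat. 1 \<le> 2 * i + 1 \<and> 2 * i + 1 \<le> air_l K D
        \<and> K - air_lam K D (2 * int i) \<le> j \<and> j < K - air_lam K D (2 * int i + 2)
        \<and> K - D - air_lam K D (2 * int i + 1) \<le> k \<and> k < K - D
        \<and> (j - (K - air_lam K D (2 * int i))) mod air_lam K D (2 * int i + 1)
             = k - (K - D - air_lam K D (2 * int i + 1)))"

definition air_c :: "nat \<Rightarrow> nat \<Rightarrow> (nat \<Rightarrow> 'a::field) \<Rightarrow> nat \<Rightarrow> 'a" where
  "air_c K D x k = (\<Sum>j<K. (if air_L K D j k then 1 else 0) * x j)"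

end

theory Submission
  imports Defs
begin

lemma lam_int1: "air_lam K D (int n - 1) = air_lamS K D n"
  unfolding air_lam_def by (simp del: air_lamS.simps)
lemma lam_int0: "air_lam K D (int n) = air_lamS K D (Suc n)"
proof -
  have "nat (int n + 1) = Suc n" by simp
  then show ?thesis unfolding air_lam_def by (simp only:)
qed
lemma lam_odd: "air_lam K D (2 * int i - 1) = air_lamS K D (2*i)"
  using lam_int1[of K D "2*i"] by (simp del: air_lamS.simps)
lemma lam_even: "air_lam K D (2 * int i) = air_lamS K D (2*i+1)"
  using lam_int0[of K D "2*i"] by (simp del: air_lamS.simps)
lemma lam_p1: "air_lam K D (2 * int i + 1) = air_lamS K D (2*i+2)"
  using lam_int0[of K D "2*i+1"] by (simp del: air_lamS.simps add: ac_simps)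
lemma lam_p2: "air_lam K D (2 * int i + 2) = air_lamS K D (2*i+3)"
  using lam_int0[of K D "2*i+2"] by (simp del: air_lamS.simps add: ac_simps numeral_eq_Suc)
lemma beta_eq: "air_beta K D n = air_lamS K D n div air_lamS K D (Suc n)"
  unfolding air_beta_def using lam_int1 lam_int0 by (simp del: air_lamS.simps)

lemma mu_step_le: "air_lamS K D (Suc (Suc n)) \<le> air_lamS K D (Suc n)"
  by (cases "air_lamS K D (Suc n) = 0") (auto intro: less_imp_le)
lemma mu_step2_le: "air_lamS K D (Suc (Suc n)) \<le> air_lamS K D n"
  by auto
lemma mu_zero_persist: "air_lamS K D (Suc n) = 0 \<Longrightarrow> air_lamS K D (Suc (Suc n)) = 0"
  by simp
lemma mu_antitone: assumes "1 \<le> n" "n \<le> m" shows "air_lamS K D m \<le> air_lamS K D n"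
  using assms(2)
proof (induction m rule: dec_induct)
  case base then show ?case by simp
next
  case (step m)
  then obtain p where "m = Suc p" using step.hyps assms(1) by (cases m) auto
  with step assms(1) show ?case using mu_step_le[of K D p] by (cases p) auto
qed
lemma mu_even_le: "air_lamS K D (2*j) \<le> air_lamS K D (2*i) \<Longrightarrow> True" by simp
lemma mu_even_anti: "i \<le> j \<Longrightarrow> air_lamS K D (2*j) \<le> air_lamS K D (2*i)"
proof (induction j rule: dec_induct)
  case base then show ?case by simp
next
  case (step j)
  have "air_lamS K D (2*Suc j) \<le> air_lamS K D (2*j)"
    using mu_step2_le[of K D "2*j"] by simp
  with step show ?case by simp
qed
lemma mu_bound: "air_lamS K D (Suc n) \<le> D - n"
proof (induction n)
  case 0 then show ?case by simp
next
  case (Suc n)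
  show ?case
  proof (cases "air_lamS K D (Suc n) = 0")
    case True then show ?thesis by simp
  next
    case False
    then have "air_lamS K D (Suc (Suc n)) < air_lamS K D (Suc n)" by simp
    with Suc show ?thesis by linarith
  qed
qed
lemma mu_euclid: "air_lamS K D (Suc n) > 0 \<Longrightarrow>
  air_lamS K D n = (air_lamS K D n div air_lamS K D (Suc n)) * air_lamS K D (Suc n) + air_lamS K D (Suc (Suc n))"
  by simp

lemma l_ex: "1 \<le> D \<Longrightarrow> air_lamS K D (D + 1) = 0"
  using mu_bound[of K D D] by simp
lemma l_props:
  assumes "1 \<le> D"
  shows "air_lamS K D (air_l K D + 2) = 0" "\<And>i. i < air_l K D \<Longrightarrow> air_lamS K D (i+2) \<noteq> 0"
proof -
  have eq: "air_l K D = (LEAST i. air_lamS K D (i+2) = 0)"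
  proof -
    have "\<And>i. air_lam K D (int i + 1) = air_lamS K D (i+2)"
      using lam_int0[of K D "Suc _"] by (simp del: air_lamS.simps add: ac_simps)
    then show ?thesis unfolding air_l_def by (simp only:)
  qed
  have ex: "air_lamS K D ((D - 1) + 2) = 0" using l_ex[OF assms] assms by (simp add: add.commute)
  show "air_lamS K D (air_l K D + 2) = 0" unfolding eq by (rule LeastI[where P="\<lambda>i. air_lamS K D (i+2) = 0", OF ex])
  show "\<And>i. i < air_l K D \<Longrightarrow> air_lamS K D (i+2) \<noteq> 0" unfolding eq by (rule not_less_Least)
qed
lemma mu_pos:
  assumes "1 \<le> D" "D < K" "n \<le> air_l K D + 1"
  shows "air_lamS K D n > 0"
proof (cases n)
  case 0 then show ?thesis using assms by simp
next
  case (Suc m)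
  show ?thesis
  proof (cases m)
    case 0 then show ?thesis using assms Suc by simp
  next
    case (Suc p)
    then have "p < air_l K D" using assms \<open>n = Suc m\<close> by simp
    then show ?thesis using l_props(2)[OF assms(1)] Suc \<open>n = Suc m\<close> by fastforce
  qed
qed
lemma mu_zero:
  assumes "1 \<le> D" "air_l K D + 2 \<le> n"
  shows "air_lamS K D n = 0"
  using assms(2)
proof (induction n rule: dec_induct)
  case base then show ?case using l_props(1)[OF assms(1)] .
next
  case (step n)
  then obtain p where "n = Suc p" using assms by (cases n) auto
  with step show ?case by simp
qed


declare air_lamS.simps(3)[simp del]

definition Bp :: "nat \<Rightarrow> nat \<Rightarrow> nat \<Rightarrow> nat \<Rightarrow> nat \<Rightarrow> bool" where
  "Bp K D k i j \<longleftrightarrow> K - air_lamS K D (2*i+1) \<le> j \<and> j < K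
     \<and> K - D - air_lamS K D (2*i) \<le> k \<and> k < K - D - air_lamS K D (2*i+2)
     \<and> (k - (K - D - air_lamS K D (2*i))) mod air_lamS K D (2*i+1) = j - (K - air_lamS K D (2*i+1))"

definition Cp :: "nat \<Rightarrow> nat \<Rightarrow> nat \<Rightarrow> nat \<Rightarrow> nat \<Rightarrow> bool" where
  "Cp K D k i j \<longleftrightarrow> K - air_lamS K D (2*i+1) \<le> j \<and> j < K - air_lamS K D (2*i+3)
     \<and> K - D - air_lamS K D (2*i+2) \<le> k \<and> k < K - D
     \<and> (j - (K - air_lamS K D (2*i+1))) mod air_lamS K D (2*i+2) = k - (K - D - air_lamS K D (2*i+2))"

lemma L_iff: "air_L K D j k \<longleftrightarrow> (j < K - D \<and> k < K - D \<and> j = k)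
   \<or> (\<exists>i\<in>{0..air_l K D div 2}. Bp K D k i j)
   \<or> (\<exists>i\<in>{..<(air_l K D + 1) div 2}. Cp K D k i j)"
proof -
  have e0: "2 * i \<le> air_l K D \<longleftrightarrow> i \<in> {0..air_l K D div 2}" for i by auto
  have e1: "(\<exists>i::nat. 2 * i \<le> air_l K D \<and> P i) \<longleftrightarrow> (\<exists>i\<in>{0..air_l K D div 2}. P i)" for P
    using e0 by blast
  have e0': "(1 \<le> 2 * i + 1 \<and> 2 * i + 1 \<le> air_l K D) \<longleftrightarrow> i \<in> {..<(air_l K D + 1) div 2}" for i
    by (simp; presburger)
  have e2: "(\<exists>i::nat. 1 \<le> 2 * i + 1 \<and> 2 * i + 1 \<le> air_l K D \<and> P i) \<longleftrightarrow> (\<exists>i\<in>{..<(air_l K D + 1) div 2}. P i)" for P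
    using e0' by blast
  show ?thesis
    unfolding air_L_def lam_odd lam_even lam_p1 lam_p2
    unfolding Bp_def Cp_def
    by (simp only: e1 e2 conj_assoc)
qed

context
  fixes K D :: nat
  assumes D1: "1 \<le> D" and DK: "D < K"
begin

lemma mu_odd_le_D: "air_lamS K D (2*i+1) \<le> D"
  using mu_antitone[of 1 "2*i+1" K D] by simp
lemma mu_even_le_a: "air_lamS K D (2*i) \<le> K - D"
  using mu_even_anti[of 0 i K D] by simp
lemma mu_le_D: "1 \<le> n \<Longrightarrow> air_lamS K D n \<le> D"
  using mu_antitone[of 1 n K D] by simp

lemma B_char:
  assumes "i \<le> air_l K D div 2"
  shows "Bp K D k i j \<longleftrightarrow> k \<in> air_C K D i \<and>
     j = K - air_lamS K D (2*i+1) + (k - (K - D - air_lamS K D (2*i))) mod air_lamS K D (2*i+1)"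
    and "K - air_lamS K D (2*i+1) + (k - (K - D - air_lamS K D (2*i))) mod air_lamS K D (2*i+1) < K"
proof -
  define p where "p = air_lamS K D (2*i+1)"
  have pp: "p > 0" unfolding p_def using mu_pos[OF D1 DK] assms by simp
  have pD: "p \<le> D" unfolding p_def by (rule mu_odd_le_D)
  have C: "air_C K D i = {K - D - air_lamS K D (2*i) ..< K - D - air_lamS K D (2*i+2)}"
    unfolding air_C_def lam_odd lam_p1 by simp
  define r where "r = (k - (K - D - air_lamS K D (2*i))) mod p"
  have rp: "r < p" unfolding r_def using pp by simp
  have "K - p + r < K" using rp pD DK by linarith
  then show "K - air_lamS K D (2*i+1) + (k - (K - D - air_lamS K D (2*i))) mod air_lamS K D (2*i+1) < K"
    unfolding p_def r_def .
  show "Bp K D k i j \<longleftrightarrow> k \<in> air_C K D i \<and>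
     j = K - air_lamS K D (2*i+1) + (k - (K - D - air_lamS K D (2*i))) mod air_lamS K D (2*i+1)"
    unfolding Bp_def C p_def[symmetric] r_def[symmetric] using rp pD DK by auto
qed

lemma B_unique:
  assumes "Bp K D k i j" "Bp K D k i' j'"
  shows "i = i'"
proof (rule ccontr)
  assume ne: "i \<noteq> i'"
  have *: False if "Bp K D k u v" "Bp K D k w z" "u < w" for u v w z
  proof -
    have "air_lamS K D (2*w) \<le> air_lamS K D (2*u+2)"
      using mu_even_anti[of "Suc u" w K D] that(3) by simp
    moreover have "k < K - D - air_lamS K D (2*u+2)" using that(1) unfolding Bp_def by blast
    moreover have "K - D - air_lamS K D (2*w) \<le> k" using that(2) unfolding Bp_def by blast
    ultimately show False by linarith
  qed
  show False using ne *[OF assms] *[OF assms(2,1)] by linarith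
qed

lemma C_unique:
  assumes "Cp K D k i j" "Cp K D k i' j"
  shows "i = i'"
proof (rule ccontr)
  assume ne: "i \<noteq> i'"
  have *: False if "Cp K D k u j" "Cp K D k w j" "u < w" for u w
  proof -
    have "air_lamS K D (2*w+1) \<le> air_lamS K D (2*u+3)"
      using mu_antitone[of "2*u+3" "2*w+1" K D] that(3) by simp
    moreover have "air_lamS K D (2*u+3) \<le> D" using mu_le_D by simp
    moreover have "j < K - air_lamS K D (2*u+3)" using that(1) unfolding Cp_def by blast
    moreover have "K - air_lamS K D (2*w+1) \<le> j" using that(2) unfolding Cp_def by blast
    ultimately show False using DK by linarith
  qed
  show False using ne *[OF assms] *[OF assms(2,1)] by linarith
qed

lemma BC_disj:
  assumes "Bp K D k i j" "Cp K D k i' j"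
  shows False
proof (cases "i \<le> i'")
  case True
  have "air_lamS K D (2*i'+2) \<le> air_lamS K D (2*i+2)"
    using mu_even_anti[of "Suc i" "Suc i'" K D] True by simp
  moreover have "k < K - D - air_lamS K D (2*i+2)" using assms(1) unfolding Bp_def by blast
  moreover have "K - D - air_lamS K D (2*i'+2) \<le> k" using assms(2) unfolding Cp_def by blast
  ultimately show False by linarith
next
  case False
  have "air_lamS K D (2*i+1) \<le> air_lamS K D (2*i'+3)"
    using mu_antitone[of "2*i'+3" "2*i+1" K D] False by simp
  moreover have "air_lamS K D (2*i'+3) \<le> D" using mu_le_D by simp
  moreover have "K - air_lamS K D (2*i+1) \<le> j" using assms(1) unfolding Bp_def by blast
  moreover have "j < K - air_lamS K D (2*i'+3)" using assms(2) unfolding Cp_def by blast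
  ultimately show False using DK by linarith
qed

lemma A_B: "j < K - D \<Longrightarrow> \<not> Bp K D k i j"
proof
  assume "j < K - D" "Bp K D k i j"
  then have "K - air_lamS K D (2*i+1) \<le> j" unfolding Bp_def by blast
  then show False using mu_odd_le_D[of i] DK \<open>j < K - D\<close> by linarith
qed
lemma A_C: "j < K - D \<Longrightarrow> \<not> Cp K D k i j"
proof
  assume "j < K - D" "Cp K D k i j"
  then have "K - air_lamS K D (2*i+1) \<le> j" unfolding Cp_def by blast
  then show False using mu_odd_le_D[of i] DK \<open>j < K - D\<close> by linarith
qed


lemma C_set:
  assumes ki: "k < K - D" and il: "i < (air_l K D + 1) div 2"
  shows "{j. j < K \<and> Cp K D k i j} =
     (if K - D - air_lamS K D (2*i+2) \<le> k
      then (\<lambda>m. k + (D - air_lamS K D (2*i+1)) + m * air_lamS K D (2*i+2))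
             ` {1..air_lamS K D (2*i+1) div air_lamS K D (2*i+2)}
      else {})"
proof -
  define p where "p = air_lamS K D (2*i+2)"
  define q where "q = air_lamS K D (2*i+1)"
  define s where "s = air_lamS K D (2*i+3)"
  define \<beta> where "\<beta> = q div p"
  have pp: "p > 0" unfolding p_def using mu_pos[OF D1 DK] il by simp
  have eu: "q = \<beta> * p + s"
    unfolding q_def \<beta>_def p_def s_def using mu_euclid[of K D "2*i+1"] pp[unfolded p_def]
    by (simp add: numeral_eq_Suc)
  have qD: "q \<le> D" unfolding q_def by (rule mu_odd_le_D)
  have pa: "p \<le> K - D" unfolding p_def using mu_even_le_a[of "Suc i"] by simp
  show ?thesis
  proof (cases "K - D - p \<le> k")
    case False
    then show ?thesis unfolding Cp_def p_def[symmetric] q_def[symmetric] s_def[symmetric] by auto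
  next
    case True
    define r where "r = k - (K - D - p)"
    have rp: "r < p" unfolding r_def using True ki pa by linarith
    have "{j. j < K \<and> Cp K D k i j} = (\<lambda>m. k + (D - q) + m * p) ` {1..\<beta>}"
    proof (rule set_eqI, rule iffI)
      fix j assume "j \<in> {j. j < K \<and> Cp K D k i j}"
      then have j1: "K - q \<le> j" and j2: "j < K - s" and j3: "(j - (K - q)) mod p = r"
        unfolding Cp_def p_def[symmetric] q_def[symmetric] s_def[symmetric] r_def by auto
      define d where "d = j - (K - q)"
      define t where "t = d div p"
      have dd: "d = t * p + r" unfolding t_def using j3[folded d_def] div_mult_mod_eq[of d p] by simp
      have "d < \<beta> * p" unfolding d_def using j1 j2 eu qD DK by linarith
      then have "t * p < \<beta> * p" using dd by linarith
      then have tb: "t < \<beta>" by simp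
      have "j = k + (D - q) + (Suc t) * p"
        using dd[unfolded d_def] j1 qD DK True rp pa unfolding r_def by simp
      then show "j \<in> (\<lambda>m. k + (D - q) + m * p) ` {1..\<beta>}" using tb
        by (intro image_eqI[where x="Suc t"]) auto
    next
      fix j assume "j \<in> (\<lambda>m. k + (D - q) + m * p) ` {1..\<beta>}"
      then obtain m where m: "1 \<le> m" "m \<le> \<beta>" and jm: "j = k + (D - q) + m * p" by auto
      obtain t where mt: "m = Suc t" using m by (cases m) auto
      have tb: "Suc t * p \<le> \<beta> * p" using m mt mult_le_mono1[of "Suc t" \<beta> p] by simp
      have jt: "j = (K - q) + (r + t * p)"
        using jm mt qD DK True rp pa unfolding r_def by simp
      have "r + t * p < \<beta> * p" using tb rp by simp
      then have "j < K - s" using jt eu qD DK by linarith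
      moreover have "(j - (K - q)) mod p = r" using jt rp by simp
      moreover have "K - q \<le> j" using jt by simp
      moreover have "j < K" using \<open>j < K - s\<close> by linarith
      ultimately show "j \<in> {j. j < K \<and> Cp K D k i j}"
        unfolding Cp_def p_def[symmetric] q_def[symmetric] s_def[symmetric] r_def
        using True ki by auto
    qed
    then show ?thesis using True unfolding p_def q_def s_def \<beta>_def by simp
  qed
qed


lemma tele:
  assumes "2*i \<le> air_l K D + 1"
  shows "(\<Sum>s = 1..i. air_beta K D (2 * s - 1) * air_lam K D (2 * int s - 1)) = D - air_lamS K D (2*i+1)"
  using assms
proof (induction i)
  case 0 then show ?case by simp
next
  case (Suc i)
  have IH: "(\<Sum>s = 1..i. air_beta K D (2 * s - 1) * air_lam K D (2 * int s - 1)) = D - air_lamS K D (2*i+1)"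
    using Suc by simp
  have tm: "air_beta K D (2 * Suc i - 1) * air_lam K D (2 * int (Suc i) - 1)
      = air_lamS K D (2*i+1) div air_lamS K D (2*i+2) * air_lamS K D (2*i+2)"
    unfolding beta_eq lam_odd by simp
  have pp: "air_lamS K D (2*i+2) > 0" using mu_pos[OF D1 DK] Suc.prems by simp
  have eu: "air_lamS K D (2*i+1) = air_lamS K D (2*i+1) div air_lamS K D (2*i+2) * air_lamS K D (2*i+2) + air_lamS K D (2*i+3)"
    using mu_euclid[of K D "2*i+1"] pp by (simp add: numeral_eq_Suc)
  have qD: "air_lamS K D (2*i+1) \<le> D" by (rule mu_odd_le_D)
  have "(\<Sum>s = 1..Suc i. air_beta K D (2 * s - 1) * air_lam K D (2 * int s - 1))
     = (\<Sum>s = 1..i. air_beta K D (2 * s - 1) * air_lam K D (2 * int s - 1))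
       + air_beta K D (2 * Suc i - 1) * air_lam K D (2 * int (Suc i) - 1)"
    by (simp del: of_nat_Suc)
  also have "\<dots> = D - air_lamS K D (2*Suc i+1)"
    unfolding IH tm using eu qD by (simp add: numeral_eq_Suc) 
  finally show ?case .
qed

end

lemma union_ivl:
  fixes f :: "nat \<Rightarrow> nat"
  assumes mono: "\<And>t. f t \<le> f (Suc t)" and im: "i \<le> m"
  shows "(\<Union>t\<in>{i..m}. {f t..<f (Suc t)}) = {f i..<f (Suc m)}"
  using im
proof (induction m rule: dec_induct)
  case base then show ?case by simp
next
  case (step m)
  have "{i..Suc m} = insert (Suc m) {i..m}" using step.hyps by auto
  then have "(\<Union>t\<in>{i..Suc m}. {f t..<f (Suc t)}) = {f i..<f (Suc m)} \<union> {f (Suc m)..<f (Suc (Suc m))}"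
    using step.IH by auto
  also have "\<dots> = {f i..<f (Suc (Suc m))}"
  proof (rule ivl_disj_un_two(3))
    show "f i \<le> f (Suc m)" using lift_Suc_mono_le[of f i "Suc m"] mono step.hyps by simp
    show "f (Suc m) \<le> f (Suc (Suc m))" by (rule mono)
  qed
  finally show ?case .
qed

lemma ind_sum:
  assumes "finite I" "\<And>i i'. i \<in> I \<Longrightarrow> i' \<in> I \<Longrightarrow> P i \<Longrightarrow> P i' \<Longrightarrow> i = i'"
  shows "(\<Sum>i\<in>I. if P i then 1 else 0) = (if \<exists>i\<in>I. P i then (1::'a::comm_semiring_1) else 0)"
proof (cases "\<exists>i\<in>I. P i")
  case True
  then obtain i0 where i0: "i0 \<in> I" "P i0" by blast
  have "(\<Sum>i\<in>I. if P i then (1::'a) else 0) = (\<Sum>i\<in>I. if i = i0 then 1 else 0)"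
    using assms(2) i0 by (intro sum.cong) auto
  also have "\<dots> = 1" using assms(1) i0 by simp
  finally show ?thesis using True by simp
next
  case False
  then show ?thesis by simp
qed



theorem theorem1:
  fixes K D k :: nat and x :: "nat \<Rightarrow> 'a::{field,finite}"
  assumes "1 \<le> D" and "D \<le> K - 1"
    and "k < K - D"
  shows "air_c K D x k =
     x k
   + (\<Sum>i = 0..air_l K D div 2.
        (if k \<in> air_C K D i
         then x ((K - air_lam K D (2 * int i))
                 + ((k - (K - D - air_lam K D (2 * int i - 1))) mod air_lam K D (2 * int i)))
         else 0))
   + (\<Sum>i = 1..(air_l K D + 1) div 2.
        (if k \<in> (\<Union>t \<in> {i..(air_l K D + 1) div 2}. air_C K D t)
         then (\<Sum>j = 1..air_beta K D (2 * i - 1).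
                 x (k + (\<Sum>s = 1..i - 1. air_beta K D (2 * s - 1) * air_lam K D (2 * int s - 1))
                      + j * air_lam K D (2 * int i - 1)))
         else 0))"
proof -
  have D1: "1 \<le> D" using assms(1) .
  have DK: "D < K" using assms(1,2) by linarith
  have ki: "k < K - D" using assms(3) .
  have kK: "k < K" using ki by linarith
  define l where "l = air_l K D"
  define m where "m = (l + 1) div 2"
  define IB where "IB = {0..l div 2}"
  define IC where "IC = {..<m}"
  let ?A = "\<lambda>j. j < K - D \<and> k < K - D \<and> j = k"
  have ind: "(if air_L K D j k then 1 else 0) =
      (if ?A j then 1 else 0) + (\<Sum>i\<in>IB. if Bp K D k i j then 1 else 0)
      + (\<Sum>i\<in>IC. if Cp K D k i j then (1::'a) else 0)" for j
  proof -
    have sB: "(\<Sum>i\<in>IB. if Bp K D k i j then 1 else 0) = (if \<exists>i\<in>IB. Bp K D k i j then (1::'a) else 0)"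
      by (rule ind_sum) (auto simp: IB_def intro: B_unique[OF D1 DK])
    have sC: "(\<Sum>i\<in>IC. if Cp K D k i j then 1 else 0) = (if \<exists>i\<in>IC. Cp K D k i j then (1::'a) else 0)"
      by (rule ind_sum) (auto simp: IC_def intro: C_unique[OF D1 DK])
    have L: "air_L K D j k \<longleftrightarrow> ?A j \<or> (\<exists>i\<in>IB. Bp K D k i j) \<or> (\<exists>i\<in>IC. Cp K D k i j)"
      unfolding L_iff IB_def IC_def m_def l_def ..
    show ?thesis unfolding sB sC L
      by (auto dest: BC_disj[OF D1 DK] simp: A_B[OF D1 DK] A_C[OF D1 DK])
  qed
  have SA: "(\<Sum>j<K. (if ?A j then 1 else 0) * x j) = x k"
  proof -
    have "(\<Sum>j<K. (if ?A j then 1 else 0) * x j) = (\<Sum>j<K. if j = k then x j else 0)"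
      using ki by (intro sum.cong) auto
    also have "\<dots> = x k" using kK by simp
    finally show ?thesis .
  qed
  have SB: "(\<Sum>j<K. (if Bp K D k i j then 1 else 0) * x j) =
      (if k \<in> air_C K D i
       then x (K - air_lamS K D (2*i+1) + (k - (K - D - air_lamS K D (2*i))) mod air_lamS K D (2*i+1))
       else 0)" if "i \<in> IB" for i
  proof -
    have il: "i \<le> air_l K D div 2" using that unfolding IB_def l_def by simp
    show ?thesis
    proof (cases "k \<in> air_C K D i")
      case True
      let ?r = "K - air_lamS K D (2*i+1) + (k - (K - D - air_lamS K D (2*i))) mod air_lamS K D (2*i+1)"
      have "(\<Sum>j<K. (if Bp K D k i j then 1 else 0) * x j) = (\<Sum>j<K. if j = ?r then x j else 0)"
        using B_char(1)[OF D1 DK il] True by (intro sum.cong) auto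
      also have "\<dots> = x ?r" using B_char(2)[OF D1 DK il] by simp
      finally show ?thesis using True by simp
    next
      case False
      then show ?thesis using B_char(1)[OF D1 DK il] by simp
    qed
  qed
  have SC: "(\<Sum>j<K. (if Cp K D k i j then 1 else 0) * x j) =
      (if K - D - air_lamS K D (2*i+2) \<le> k
       then (\<Sum>n\<in>{1..air_lamS K D (2*i+1) div air_lamS K D (2*i+2)}.
               x (k + (D - air_lamS K D (2*i+1)) + n * air_lamS K D (2*i+2)))
       else 0)" if "i \<in> IC" for i
  proof -
    have il: "i < (air_l K D + 1) div 2" using that unfolding IC_def m_def l_def by simp
    have pp: "air_lamS K D (2*i+2) > 0" using mu_pos[OF D1 DK] il by simp
    have "(\<Sum>j<K. (if Cp K D k i j then 1 else 0) * x j) = (\<Sum>j<K. if Cp K D k i j then x j else 0)"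
      by (intro sum.cong) auto
    also have "\<dots> = sum x {j \<in> {..<K}. Cp K D k i j}"
      by (rule sum.inter_filter[symmetric]) simp
    also have "{j \<in> {..<K}. Cp K D k i j} = {j. j < K \<and> Cp K D k i j}" by auto
    also note C_set[OF D1 DK ki il]
    finally show ?thesis
      using pp by (auto simp: sum.reindex inj_on_def)
  qed
  have main: "air_c K D x k = x k + (\<Sum>i\<in>IB. \<Sum>j<K. (if Bp K D k i j then 1 else 0) * x j)
      + (\<Sum>i\<in>IC. \<Sum>j<K. (if Cp K D k i j then 1 else 0) * x j)"
  proof -
    have "air_c K D x k = (\<Sum>j<K. ((if ?A j then 1 else 0) + (\<Sum>i\<in>IB. if Bp K D k i j then 1 else 0)
      + (\<Sum>i\<in>IC. if Cp K D k i j then 1 else 0)) * x j)"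
      unfolding air_c_def using ind by simp
    also have "\<dots> = (\<Sum>j<K. (if ?A j then 1 else 0) * x j) + (\<Sum>j<K. \<Sum>i\<in>IB. (if Bp K D k i j then 1 else 0) * x j)
      + (\<Sum>j<K. \<Sum>i\<in>IC. (if Cp K D k i j then 1 else 0) * x j)"
      by (simp add: distrib_right sum.distrib sum_distrib_right)
    also have "\<dots> = x k + (\<Sum>i\<in>IB. \<Sum>j<K. (if Bp K D k i j then 1 else 0) * x j)
      + (\<Sum>i\<in>IC. \<Sum>j<K. (if Cp K D k i j then 1 else 0) * x j)"
      unfolding SA by (simp add: sum.swap[of _ IB] sum.swap[of _ IC])
    finally show ?thesis .
  qed
  have part1: "(\<Sum>i\<in>IB. \<Sum>j<K. (if Bp K D k i j then 1 else 0) * x j) =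
     (\<Sum>i = 0..air_l K D div 2.
        (if k \<in> air_C K D i
         then x ((K - air_lam K D (2 * int i))
                 + ((k - (K - D - air_lam K D (2 * int i - 1))) mod air_lam K D (2 * int i)))
         else 0))"
    unfolding lam_even lam_odd IB_def[symmetric] l_def[symmetric]
    by (rule sum.cong) (simp_all add: SB)
  have part2: "(\<Sum>i\<in>IC. \<Sum>j<K. (if Cp K D k i j then 1 else 0) * x j) =
     (\<Sum>i = 1..(air_l K D + 1) div 2.
        (if k \<in> (\<Union>t \<in> {i..(air_l K D + 1) div 2}. air_C K D t)
         then (\<Sum>j = 1..air_beta K D (2 * i - 1).
                 x (k + (\<Sum>s = 1..i - 1. air_beta K D (2 * s - 1) * air_lam K D (2 * int s - 1))
                      + j * air_lam K D (2 * int i - 1)))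
         else 0))" (is "_ = (\<Sum>i = 1.._. ?g i)")
  proof -
    have "(\<Sum>i = 1..(air_l K D + 1) div 2. ?g i) = (\<Sum>i\<in>IC. ?g (Suc i))"
      unfolding IC_def m_def l_def using sum.atLeast1_atMost_eq[of ?g] by simp
    also have "\<dots> = (\<Sum>i\<in>IC. \<Sum>j<K. (if Cp K D k i j then 1 else 0) * x j)"
    proof (rule sum.cong[OF refl])
      fix i assume iI: "i \<in> IC"
      have il: "i < m" using iI unfolding IC_def by simp
      let ?f = "\<lambda>t. K - D - air_lamS K D (2*t)"
      have Ceq: "air_C K D t = {?f t..<?f (Suc t)}" for t
        unfolding air_C_def lam_odd lam_p1 by simp
      have fmono: "?f t \<le> ?f (Suc t)" for t
        using mu_even_anti[of t "Suc t" K D] by simp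
      have fz: "?f (Suc m) = K - D"
      proof -
        have "air_l K D + 2 \<le> 2 * Suc m" unfolding m_def l_def by simp
        then have "air_lamS K D (2 * Suc m) = 0" using mu_zero[where K=K and D=D and n="2 * Suc m", OF D1] by simp
        then show ?thesis by simp
      qed
      have U: "(\<Union>t \<in> {Suc i..m}. air_C K D t) = {?f (Suc i)..<K - D}"
        unfolding Ceq using union_ivl[of ?f "Suc i" m, OF fmono] il fz by simp
      have cond: "k \<in> (\<Union>t \<in> {Suc i..m}. air_C K D t) \<longleftrightarrow> K - D - air_lamS K D (2*i+2) \<le> k"
        unfolding U using ki by simp
      have tl: "(\<Sum>s = 1..i. air_beta K D (2 * s - 1) * air_lam K D (2 * int s - 1)) = D - air_lamS K D (2*i+1)"
        using tele[OF D1 DK, of i] il unfolding m_def l_def by simp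
      have b: "air_beta K D (2 * Suc i - 1) = air_lamS K D (2*i+1) div air_lamS K D (2*i+2)"
        unfolding beta_eq by simp
      have la: "air_lam K D (2 * int (Suc i) - 1) = air_lamS K D (2*i+2)"
        unfolding lam_odd by simp
      show "?g (Suc i) = (\<Sum>j<K. (if Cp K D k i j then 1 else 0) * x j)"
        unfolding SC[OF iI] m_def[symmetric] l_def[symmetric]
        using cond tl b la by (simp del: of_nat_Suc)
    qed
    finally show ?thesis by simp
  qed
  show ?thesis using main part1 part2 by simp
qed

end
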